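(* Let $\mathbb P$ be a forcing by Silver trees, $S,T\in\mathbb P$, $f:2^\omega\to 2^\omega$ continuous, and $\sigma\in 2^{<\omega}$. Then: (i) there are $S',T'\in\mathbb P$ with $S'\subseteq S$, $T'\subseteq T$ and $[T']\cap(\sigma\cdot f[[S']])=\emptyset$; (ii) if $\tau\in 2^{<\omega}$, $T=\tau\cdot S$, and $f$ is regular on $S$ inside $\mathbb P$, then there are $S',T'\in\mathbb P$ with $S'\subseteq S$, $T'\subseteq T$, $T'=\tau\cdot S'$ and $[T']\cap(\sigma\cdot f[[S']])=\emptyset$.
   Context: $2^{<\omega}$ is the set of finite binary strings, $2^\omega$ the Cantor space. A set $T\subseteq 2^{<\omega}$ is a Silver tree if there are strings $u_0,u_1,\dots$ such that $T$ consists exactly of all strings $u_0{}^\frown i_0{}^\frown\cdots{}^\frown u_m{}^\frown i_m$ ($m<\omega$, $i_k\in\{0,1\}$) and all their initial segments; $[T]$ is the set of its infinite branches. For $u\in T$, $T\restriction u=\{t\in T:u\subseteq t\text{ or }t\subseteq u\}$. Actions: for $s\in 2^{<\omega}$ and $x\in 2^\omega$, $(s\cdot x)(k)=x(k)+s(k)\bmod 2$ for $k<|s|$ and $(s\cdot x)(k)=x(k)$ otherwise; $s\cdot X=\{s\cdot x:x\in X\}$; for strings $s\in 2^m$, $t\in 2^k$ with $m\le k$, $(s\cdot t)(j)=t(j)+s(j)\bmod 2$ for $j<m$ and $=t(j)$ for $m\le j<k$, and if $m>k$, $s\cdot t=(s\restriction k)\cdot t$; $s\cdot T=\{s\cdot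 t:t\in T\}$. A forcing by Silver trees is a set $\mathbb P$ of Silver trees closed under $T\mapsto T\restriction u$ ($u\in T$) and $T\mapsto\sigma\cdot T$. A continuous $f:2^\omega\to 2^\omega$ is regular on $T\in\mathbb P$ inside $\mathbb P$ if there is no $T'\in\mathbb P$ with $T'\subseteq T$ and no $\sigma\in 2^{<\omega}$ such that $f(x)=\sigma\cdot x$ for all $x\in[T']$. *)

theory Defs
  imports "HOL-Analysis.Analysis" "HOL-Library.Sublist"
begin

text \<open>Finite binary strings are \<open>bool list\<close>; Cantor space is \<open>nat \<Rightarrow> bool\<close>
  (with the product topology of the discrete space \<open>bool\<close>). Addition mod 2 is \<open>\<noteq>\<close> (xor).\<close>

definition silver_node :: "(nat \<Rightarrow> bool list) \<Rightarrow> bool list \<Rightarrow> bool list" where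
  "silver_node u is = concat (map (\<lambda>k. u k @ [is ! k]) [0..<length is])"

definition silver_tree :: "bool list set \<Rightarrow> bool" where
  "silver_tree T \<longleftrightarrow> (\<exists>u. T = {t. \<exists>is. is \<noteq> [] \<and> prefix t (silver_node u is)})"

definition branches :: "bool list set \<Rightarrow> (nat \<Rightarrow> bool) set" where
  "branches T = {x. \<forall>n. map x [0..<n] \<in> T}"

definition restr :: "bool list set \<Rightarrow> bool list \<Rightarrow> bool list set" where
  "restr T u = {t \<in> T. prefix u t \<or> prefix t u}"

definition act_pt :: "bool list \<Rightarrow> (nat \<Rightarrow> bool) \<Rightarrow> (nat \<Rightarrow> bool)" where
  "act_pt s x = (\<lambda>k. if k < length s then x k \<noteq> s ! k else x k)"

definition act_set :: "bool list \<Rightarrow> (nat \<Rightarrow> bool) set \<Rightarrow> (nat \<Rightarrow> bool) set" where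
  "act_set s X = act_pt s ` X"

definition act_str :: "bool list \<Rightarrow> bool list \<Rightarrow> bool list" where
  "act_str s t = map (\<lambda>j. if j < length s then t ! j \<noteq> s ! j else t ! j) [0..<length t]"

definition act_tree :: "bool list \<Rightarrow> bool list set \<Rightarrow> bool list set" where
  "act_tree s T = act_str s ` T"

definition silver_forcing :: "bool list set set \<Rightarrow> bool" where
  "silver_forcing P \<longleftrightarrow>
     (\<forall>T\<in>P. silver_tree T) \<and>
     (\<forall>T\<in>P. \<forall>u\<in>T. restr T u \<in> P) \<and>
     (\<forall>T\<in>P. \<forall>\<sigma>. act_tree \<sigma> T \<in> P)"

definition regular_on :: "((nat \<Rightarrow> bool) \<Rightarrow> (nat \<Rightarrow> bool)) \<Rightarrow> bool list set \<Rightarrow> bool list set set \<Rightarrow> bool" where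
  "regular_on f T P \<longleftrightarrow>
     \<not> (\<exists>T'\<in>P. T' \<subseteq> T \<and> (\<exists>\<sigma>. \<forall>x\<in>branches T'. f x = act_pt \<sigma> x))"

end

theory Submission
  imports Defs
begin

lemma cont_local:
  fixes f :: "(nat \<Rightarrow> bool) \<Rightarrow> (nat \<Rightarrow> bool)"
  assumes "continuous_on UNIV f"
  shows "\<exists>n. \<forall>y. (\<forall>k<n. y k = x k) \<longrightarrow> f y N = f x N"
proof -
  have g: "continuous_on UNIV (\<lambda>y. f y N)"
    using continuous_on_product_then_coordinatewise[OF assms] .
  have "open (UNIV \<inter> (\<lambda>y. f y N) -` {f x N})"
  proof -
    have "open {f x N}" by (rule open_discrete)
    then show ?thesis using continuous_on_open_vimage[of UNIV "\<lambda>y. f y N"] g by (simp add: Int_commute)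
  qed
  hence "openin (product_topology (\<lambda>i. euclidean) UNIV) ((\<lambda>y. f y N) -` {f x N})"
    by (simp add: open_fun_def)
  then have "\<exists>U. finite {i \<in> UNIV. U i \<noteq> topspace (euclidean::bool topology)} \<and>
                 (\<forall>i \<in> UNIV. openin euclidean (U i)) \<and> x \<in> Pi\<^sub>E UNIV U \<and> Pi\<^sub>E UNIV U \<subseteq> (\<lambda>y. f y N) -` {f x N}"
    unfolding openin_product_topology_alt by (meson vimage_singleton_eq)
  then obtain W where W: "finite {i. W i \<noteq> UNIV}" "x \<in> Pi\<^sub>E UNIV W"
    "Pi\<^sub>E UNIV W \<subseteq> (\<lambda>y. f y N) -` {f x N}"
    by auto
  obtain n where n: "\<forall>i\<in>{i. W i \<noteq> UNIV}. i < n"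
    using W(1) finite_nat_set_iff_bounded by blast
  show ?thesis
  proof (intro exI allI impI)
    fix y assume y: "\<forall>k<n. y k = x k"
    have "y \<in> Pi\<^sub>E UNIV W"
    proof -
      have "y i \<in> W i" for i
      proof (cases "W i = UNIV")
        case False
        then have "i < n" using n by auto
        then show ?thesis using y W(2) by (auto simp: PiE_iff)
      qed auto
      then show ?thesis by (auto simp: PiE_iff)
    qed
    then show "f y N = f x N" using W(3) by auto
  qed
qed

lemma prefix_len_eq: "prefix a b \<or> prefix b a \<Longrightarrow> length a = length b \<Longrightarrow> a = b"
  by (auto simp: prefix_def)

lemma branches_restr:
  assumes "z \<in> branches (restr S u)" "k < length u"
  shows "z k = u ! k"
proof -
  have "map z [0..<length u] \<in> restr S u" using assms(1) by (simp add: branches_def)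
  hence "prefix u (map z [0..<length u]) \<or> prefix (map z [0..<length u]) u"
    by (simp add: restr_def)
  hence "map z [0..<length u] = u"
    using prefix_len_eq[of "map z [0..<length u]" u] by auto
  hence "map z [0..<length u] ! k = u ! k" by simp
  then show ?thesis using assms(2) by simp
qed

lemma branches_act_restr:
  assumes "z \<in> branches (act_tree \<tau> (restr S u))" "k < length u"
  shows "z k = act_pt \<tau> (\<lambda>i. u ! i) k"
proof -
  have "map z [0..<length u] \<in> act_tree \<tau> (restr S u)" using assms(1) by (simp add: branches_def)
  then obtain t where t: "t \<in> restr S u" "map z [0..<length u] = act_str \<tau> t"
    by (auto simp: act_tree_def)
  have "length (act_str \<tau> t) = length t" by (simp add: act_str_def)
  hence lt: "length t = length u"
    using t(2) by (metis diff_zero length_map length_upt)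
  have "prefix u t \<or> prefix t u" using t(1) by (simp add: restr_def)
  hence "t = u" using lt prefix_len_eq[of t u] by auto
  hence "map z [0..<length u] = act_str \<tau> u" using t by simp
  hence "map z [0..<length u] ! k = act_str \<tau> u ! k" by simp
  hence "z k = act_str \<tau> u ! k" using assms(2) by simp
  then show ?thesis using assms(2) by (simp add: act_str_def act_pt_def)
qed

lemma silver_two:
  assumes "silver_tree T"
  shows "\<exists>w. \<forall>b. w @ [b] \<in> T"
proof -
  obtain u where u: "T = {t. \<exists>is. is \<noteq> [] \<and> prefix t (silver_node u is)}"
    using assms by (auto simp: silver_tree_def)
  have "u 0 @ [b] \<in> T" for b
    unfolding u by (rule CollectI, rule exI[of _ "[b]"]) (simp add: silver_node_def)
  then show ?thesis by blast
qed

lemma act_pt_invol: "act_pt s (act_pt s x) = x"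
  by (auto simp: act_pt_def)

lemma act_pt_comp: "\<exists>\<rho>. \<forall>x. act_pt \<rho> x = act_pt s (act_pt t x)"
proof (intro exI allI)
  fix x
  let ?r = "map (\<lambda>j. (j < length s \<and> s ! j) \<noteq> (j < length t \<and> t ! j)) [0..<max (length s) (length t)]"
  show "act_pt ?r x = act_pt s (act_pt t x)"
  proof
    fix k
    show "act_pt ?r x k = act_pt s (act_pt t x) k"
      by (cases "k < length s"; cases "k < length t"; cases "x k"; cases "s ! k"; cases "t ! k"; simp add: act_pt_def max_def)
  qed
qed

theorem lemma7p2:
  fixes P :: "bool list set set" and S T :: "bool list set"
    and f :: "(nat \<Rightarrow> bool) \<Rightarrow> (nat \<Rightarrow> bool)" and \<sigma> :: "bool list"
  assumes "silver_forcing P" and "S \<in> P" and "T \<in> P" and "continuous_on UNIV f"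
  shows "(\<exists>S' T'. S' \<in> P \<and> T' \<in> P \<and> S' \<subseteq> S \<and> T' \<subseteq> T \<and>
            branches T' \<inter> act_set \<sigma> (f ` branches S') = {})
       \<and> (\<forall>\<tau>. T = act_tree \<tau> S \<and> regular_on f S P \<longrightarrow>
            (\<exists>S' T'. S' \<in> P \<and> T' \<in> P \<and> S' \<subseteq> S \<and> T' \<subseteq> T \<and> T' = act_tree \<tau> S' \<and>
               branches T' \<inter> act_set \<sigma> (f ` branches S') = {}))"
proof
  have PS: "\<And>A u. A \<in> P \<Longrightarrow> u \<in> A \<Longrightarrow> restr A u \<in> P"
    and PA: "\<And>A s. A \<in> P \<Longrightarrow> act_tree s A \<in> P"
    and PT: "\<And>A. A \<in> P \<Longrightarrow> silver_tree A"
    using assms(1) by (auto simp: silver_forcing_def)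
  have rsub: "\<And>A u. restr A u \<subseteq> A" by (auto simp: restr_def)
  have rself: "\<And>A u. u \<in> A \<Longrightarrow> u \<in> restr A u" by (auto simp: restr_def)
  show "\<exists>S' T'. S' \<in> P \<and> T' \<in> P \<and> S' \<subseteq> S \<and> T' \<subseteq> T \<and>
            branches T' \<inter> act_set \<sigma> (f ` branches S') = {}"
  proof (cases "branches S = {}")
    case True
    then show ?thesis using assms by (intro exI[of _ S] exI[of _ T]) (auto simp: act_set_def)
  next
    case False
    then obtain x where x: "x \<in> branches S" by blast
    obtain w where w: "\<And>b. w @ [b] \<in> T" using silver_two[OF PT[OF assms(3)]] by blast
    define N where "N = length w"
    define b where "b = (\<not> act_pt \<sigma> (f x) N)"
    obtain n where n: "\<And>y. (\<forall>k<n. y k = x k) \<Longrightarrow> f y N = f x N"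
      using cont_local[OF assms(4)] by blast
    define u where "u = map x [0..<n]"
    have uS: "u \<in> S" using x by (simp add: branches_def u_def)
    show ?thesis
    proof (intro exI conjI)
      show "restr S u \<in> P" by (rule PS[OF assms(2) uS])
      show "restr T (w @ [b]) \<in> P" by (rule PS[OF assms(3) w])
      show "restr S u \<subseteq> S" "restr T (w @ [b]) \<subseteq> T" by (rule rsub)+
      show "branches (restr T (w @ [b])) \<inter> act_set \<sigma> (f ` branches (restr S u)) = {}"
      proof (rule ccontr)
        assume "\<not> ?thesis"
        then obtain z x' where z: "z \<in> branches (restr T (w @ [b]))"
          and x': "x' \<in> branches (restr S u)" and zx: "z = act_pt \<sigma> (f x')"
          by (auto simp: act_set_def)
        have "z N = b" using branches_restr[OF z, of N] by (simp add: N_def)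
        moreover have "\<forall>k<n. x' k = x k"
          using branches_restr[OF x'] by (simp add: u_def)
        hence "f x' N = f x N" by (rule n)
        hence "z N = act_pt \<sigma> (f x) N" using zx by (simp add: act_pt_def max_def)
        ultimately show False by (simp add: b_def)
      qed
    qed
  qed
  show "\<forall>\<tau>. T = act_tree \<tau> S \<and> regular_on f S P \<longrightarrow>
            (\<exists>S' T'. S' \<in> P \<and> T' \<in> P \<and> S' \<subseteq> S \<and> T' \<subseteq> T \<and> T' = act_tree \<tau> S' \<and>
               branches T' \<inter> act_set \<sigma> (f ` branches S') = {})"
  proof (intro allI impI)
    fix \<tau> assume h: "T = act_tree \<tau> S \<and> regular_on f S P"
    obtain \<rho> where \<rho>: "\<And>y. act_pt \<rho> y = act_pt \<sigma> (act_pt \<tau> y)"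
      using act_pt_comp by blast
    have "\<not> (\<forall>y\<in>branches S. f y = act_pt \<rho> y)"
      using h assms(2) by (auto simp: regular_on_def)
    then obtain x where x: "x \<in> branches S" and fx: "f x \<noteq> act_pt \<rho> x" by blast
    have "act_pt \<sigma> (f x) \<noteq> act_pt \<tau> x"
    proof
      assume eq: "act_pt \<sigma> (f x) = act_pt \<tau> x"
      have "f x = act_pt \<sigma> (act_pt \<sigma> (f x))" by (simp only: act_pt_invol)
      also have "\<dots> = act_pt \<sigma> (act_pt \<tau> x)" by (simp only: eq)
      also have "\<dots> = act_pt \<rho> x" by (simp only: \<rho>)
      finally show False using fx by simp
    qed
    then obtain N where N: "act_pt \<sigma> (f x) N \<noteq> act_pt \<tau> x N" by blast
    obtain n0 where n: "\<And>y. (\<forall>k<n0. y k = x k) \<Longrightarrow> f y N = f x N"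
      using cont_local[OF assms(4)] by blast
    define n where "n = max n0 (Suc N)"
    define u where "u = map x [0..<n]"
    have uS: "u \<in> S" using x by (simp add: branches_def u_def)
    show "\<exists>S' T'. S' \<in> P \<and> T' \<in> P \<and> S' \<subseteq> S \<and> T' \<subseteq> T \<and> T' = act_tree \<tau> S' \<and>
               branches T' \<inter> act_set \<sigma> (f ` branches S') = {}"
    proof (intro exI conjI)
      show "restr S u \<in> P" by (rule PS[OF assms(2) uS])
      then show "act_tree \<tau> (restr S u) \<in> P" by (rule PA)
      show "restr S u \<subseteq> S" by (rule rsub)
      show "act_tree \<tau> (restr S u) \<subseteq> T" unfolding act_tree_def using h rsub[of S u]
        by (simp add: act_tree_def image_mono)
      show "act_tree \<tau> (restr S u) = act_tree \<tau> (restr S u)" ..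
      show "branches (act_tree \<tau> (restr S u)) \<inter> act_set \<sigma> (f ` branches (restr S u)) = {}"
      proof (rule ccontr)
        assume "\<not> ?thesis"
        then obtain z x' where z: "z \<in> branches (act_tree \<tau> (restr S u))"
          and x': "x' \<in> branches (restr S u)" and zx: "z = act_pt \<sigma> (f x')"
          by (auto simp: act_set_def)
        have Nl: "N < length u" by (simp add: u_def n_def)
        have "z N = act_pt \<tau> (\<lambda>i. u ! i) N" using branches_act_restr[OF z Nl] .
        hence z1: "z N = act_pt \<tau> x N" using Nl by (simp add: act_pt_def u_def n_def)
        have "\<forall>k<n0. x' k = x k"
          using branches_restr[OF x'] by (simp add: u_def n_def)
        hence "f x' N = f x N" by (rule n)
        hence "z N = act_pt \<sigma> (f x) N" using zx by (simp add: act_pt_def max_def)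
        with z1 N show False by simp
      qed
    qed
  qed
qed

end
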